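(* Let $\mathbb{K}$ be a field of characteristic zero, $\mathbb{F}$ an algebraic closure of $\mathbb{K}$, and $\alpha\in\mathbb{F}$ algebraic of degree $n$ over $\mathbb{K}$. Let $\psi(t)\in \mathbb{K}(\alpha)(t)^m$ be a proper parametrization of a rational curve $\mathcal{C}\subseteq\mathbb{F}^m$, and assume that $\mathcal{C}$ is defined over $\mathbb{K}$. Let $\phi=(\phi_0,\ldots,\phi_{n-1})$ be the standard parametrization of the hypercircle $\mathcal{U}$ associated to $\psi$. Let $\sigma$ be a $\mathbb{K}$-automorphism of $\mathbb{F}$, let $\phi^{\sigma}$, $\psi^{\sigma}$ be the conjugate parametrizations, and let $u_{\sigma}(t)=(\phi^{\sigma})^{-1}\circ\phi=\sum_{i=0}^{n-1}\sigma(\alpha)^i\phi_i(t)$ be the conjugation isomorphism induced by $\mathcal{U}$ between the pencils of hyperplanes $\{\sum_{i}\alpha^ix_i=t\}$ and $\{\sum_i\sigma(\alpha)^ix_i=t\}$. Then $u_{\sigma}=(\psi^{\sigma})^{-1}\circ\psi$ (as rational maps), i.e. $\psi(t)=\psi^{\sigma}(u_\sigma(t))$.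
   Context: A parametrization $\psi$ of $\mathcal{C}$ is proper if it is birational onto $\mathcal{C}$. A curve is defined over a subfield $\mathbb{L}$ if it is the zero set of polynomials with coefficients in $\mathbb{L}$. For a $\mathbb{K}$-automorphism $\sigma$ of $\mathbb{F}$ and a rational function $f$ with coefficients in $\mathbb{F}$, $f^{\sigma}$ denotes the function obtained by applying $\sigma$ to the coefficients of $f$ (componentwise for tuples). Hypercircle associated to $\psi=(\psi_1,\dots,\psi_m)$: substitute $t=\sum_{i=0}^{n-1}\alpha^it_i$ with new variables $t_0,\dots,t_{n-1}$ and write $\psi_j(\sum_i\alpha^it_i)=\sum_{i=0}^{n-1}\alpha^i F_{ij}/D$ with $F_{ij},D\in\mathbb{K}[t_0,\dots,t_{n-1}]$; let $\mathcal{Z}\subseteq\mathbb{F}^n$ be the Zariski closure of $\{F_{ij}=0,\ 1\le i\le n-1,\ 1\le j\le m\}\setminus\{D=0\}$. When $\mathcal{C}$ is defined over $\mathbb{K}$, $\mathcal{Z}$ has exactly one irreducible component of dimension $1$, the hypercircle $\mathcal{U}$; it is a rational curve parametrized by the pencil of hyperplanes $\{\sum_{i=0}^{n-1}\alpha^ix_i=t\}$, and the resulting proper parametrization $\phi=(\phi_0,\dots,\phi_{n-1})\in\mathbb{K}(\alpha)(t)^n$, characterized by $\sum_{i=0}^{n-1}\alpha^i\phi_i(t)=t$, is called the standard parametrization of $\mathcal{U}$; the inverse of $\phi^\sigma$ is $(x_0,\dots,x_{n-1})\mapsto\sum_i\sigma(\alpha)^ix_i$. *)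

theory Defs
  imports "HOL-Computational_Algebra.Polynomial"
begin

definition is_subfield :: "'a::field set \<Rightarrow> bool" where
  "is_subfield K \<longleftrightarrow> 0 \<in> K \<and> 1 \<in> K \<and>
     (\<forall>x\<in>K. \<forall>y\<in>K. x + y \<in> K \<and> x - y \<in> K \<and> x * y \<in> K) \<and>
     (\<forall>x\<in>K. inverse x \<in> K)"

definition poly_over :: "'a::field set \<Rightarrow> 'a poly \<Rightarrow> bool" where
  "poly_over K p \<longleftrightarrow> set (coeffs p) \<subseteq> K"

definition is_algebraic_closure_of :: "'a::field set \<Rightarrow> bool" where
  "is_algebraic_closure_of K \<longleftrightarrow> is_subfield K \<and>
     (\<forall>p::'a poly. degree p > 0 \<longrightarrow> (\<exists>x. poly p x = 0)) \<and>
     (\<forall>x::'a. \<exists>p. p \<noteq> 0 \<and> poly_over K p \<and> poly p x = 0)"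

definition alg_degree :: "'a::field set \<Rightarrow> 'a \<Rightarrow> nat \<Rightarrow> bool" where
  "alg_degree K \<alpha> n \<longleftrightarrow>
     (\<exists>p. p \<noteq> 0 \<and> poly_over K p \<and> poly p \<alpha> = 0 \<and> degree p = n) \<and>
     (\<forall>q. q \<noteq> 0 \<and> poly_over K q \<and> poly q \<alpha> = 0 \<longrightarrow> n \<le> degree q)"

definition adjoin :: "'a::field set \<Rightarrow> 'a \<Rightarrow> 'a set" where
  "adjoin K \<alpha> = \<Inter>{L. is_subfield L \<and> K \<subseteq> L \<and> \<alpha> \<in> L}"

definition is_K_automorphism :: "'a::field set \<Rightarrow> ('a \<Rightarrow> 'a) \<Rightarrow> bool" where
  "is_K_automorphism K \<sigma> \<longleftrightarrow> bij \<sigma> \<and>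
     (\<forall>x y. \<sigma> (x + y) = \<sigma> x + \<sigma> y \<and> \<sigma> (x * y) = \<sigma> x * \<sigma> y) \<and>
     (\<forall>c\<in>K. \<sigma> c = c)"

text \<open>Points of F^n are represented as functions nat => 'a vanishing from index n on.\<close>
definition affine :: "nat \<Rightarrow> (nat \<Rightarrow> 'a::zero) set" where
  "affine n = {x. \<forall>i\<ge>n. x i = 0}"

text \<open>Polynomial functions in the variables x_0..x_{n-1} with coefficients in S
  (over the infinite field F these are the same as polynomials).\<close>
inductive_set poly_funs :: "'a::field set \<Rightarrow> nat \<Rightarrow> ((nat \<Rightarrow> 'a) \<Rightarrow> 'a) set"
  for S :: "'a set" and n :: nat where
  pf_const: "c \<in> S \<Longrightarrow> (\<lambda>x. c) \<in> poly_funs S n"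
| pf_var: "i < n \<Longrightarrow> (\<lambda>x. x i) \<in> poly_funs S n"
| pf_add: "f \<in> poly_funs S n \<Longrightarrow> g \<in> poly_funs S n \<Longrightarrow> (\<lambda>x. f x + g x) \<in> poly_funs S n"
| pf_mult: "f \<in> poly_funs S n \<Longrightarrow> g \<in> poly_funs S n \<Longrightarrow> (\<lambda>x. f x * g x) \<in> poly_funs S n"

definition zero_set :: "nat \<Rightarrow> ((nat \<Rightarrow> 'a) \<Rightarrow> 'a) set \<Rightarrow> (nat \<Rightarrow> 'a::field) set" where
  "zero_set n P = {x \<in> affine n. \<forall>f\<in>P. f x = 0}"

definition defined_over :: "'a::field set \<Rightarrow> nat \<Rightarrow> (nat \<Rightarrow> 'a) set \<Rightarrow> bool" where
  "defined_over S n A \<longleftrightarrow> (\<exists>P \<subseteq> poly_funs S n. A = zero_set n P)"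

definition zar_closed :: "nat \<Rightarrow> (nat \<Rightarrow> 'a::field) set \<Rightarrow> bool" where
  "zar_closed n A \<longleftrightarrow> defined_over UNIV n A"

definition zar_closure :: "nat \<Rightarrow> (nat \<Rightarrow> 'a::field) set \<Rightarrow> (nat \<Rightarrow> 'a) set" where
  "zar_closure n A = \<Inter>{B. zar_closed n B \<and> A \<subseteq> B}"

definition zar_irreducible :: "nat \<Rightarrow> (nat \<Rightarrow> 'a::field) set \<Rightarrow> bool" where
  "zar_irreducible n A \<longleftrightarrow> A \<noteq> {} \<and> zar_closed n A \<and>
     (\<forall>B C. zar_closed n B \<longrightarrow> zar_closed n C \<longrightarrow> A \<subseteq> B \<union> C \<longrightarrow> A \<subseteq> B \<or> A \<subseteq> C)"

definition has_irred_chain :: "nat \<Rightarrow> (nat \<Rightarrow> 'a::field) set \<Rightarrow> nat \<Rightarrow> bool" where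
  "has_irred_chain n A k \<longleftrightarrow> (\<exists>Zs :: nat \<Rightarrow> (nat \<Rightarrow> 'a) set.
     (\<forall>i\<le>k. zar_irreducible n (Zs i) \<and> Zs i \<subseteq> A) \<and> (\<forall>i<k. Zs i \<subset> Zs (Suc i)))"

definition zar_dim_eq :: "nat \<Rightarrow> (nat \<Rightarrow> 'a::field) set \<Rightarrow> nat \<Rightarrow> bool" where
  "zar_dim_eq n A d \<longleftrightarrow> has_irred_chain n A d \<and> \<not> has_irred_chain n A (Suc d)"

definition irred_component :: "nat \<Rightarrow> (nat \<Rightarrow> 'a::field) set \<Rightarrow> (nat \<Rightarrow> 'a) set \<Rightarrow> bool" where
  "irred_component n Z U \<longleftrightarrow> zar_irreducible n U \<and> U \<subseteq> Z \<and>
     (\<forall>V. zar_irreducible n V \<longrightarrow> U \<subseteq> V \<longrightarrow> V \<subseteq> Z \<longrightarrow> V = U)"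

text \<open>A rational function in t is represented as (numerator, denominator).\<close>
type_synonym 'a ratfun = "'a poly \<times> 'a poly"

definition rf_over :: "'a::field set \<Rightarrow> 'a ratfun \<Rightarrow> bool" where
  "rf_over L r \<longleftrightarrow> poly_over L (fst r) \<and> poly_over L (snd r) \<and> snd r \<noteq> 0"

definition rf_defined :: "'a::field ratfun \<Rightarrow> 'a \<Rightarrow> bool" where
  "rf_defined r t \<longleftrightarrow> poly (snd r) t \<noteq> 0"

definition rf_eval :: "'a::field ratfun \<Rightarrow> 'a \<Rightarrow> 'a" where
  "rf_eval r t = poly (fst r) t / poly (snd r) t"

definition rf_conj :: "('a \<Rightarrow> 'a) \<Rightarrow> 'a::field ratfun \<Rightarrow> 'a ratfun" where
  "rf_conj \<sigma> r = (map_poly \<sigma> (fst r), map_poly \<sigma> (snd r))"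

definition tup_defined :: "nat \<Rightarrow> (nat \<Rightarrow> 'a::field ratfun) \<Rightarrow> 'a \<Rightarrow> bool" where
  "tup_defined m \<psi> t \<longleftrightarrow> (\<forall>j<m. rf_defined (\<psi> j) t)"

definition tup_eval :: "nat \<Rightarrow> (nat \<Rightarrow> 'a::field ratfun) \<Rightarrow> 'a \<Rightarrow> (nat \<Rightarrow> 'a)" where
  "tup_eval m \<psi> t = (\<lambda>j. if j < m then rf_eval (\<psi> j) t else 0)"

definition tup_conj :: "('a \<Rightarrow> 'a) \<Rightarrow> (nat \<Rightarrow> 'a::field ratfun) \<Rightarrow> (nat \<Rightarrow> 'a ratfun)" where
  "tup_conj \<sigma> \<psi> = (\<lambda>j. rf_conj \<sigma> (\<psi> j))"

definition tup_over :: "'a::field set \<Rightarrow> nat \<Rightarrow> (nat \<Rightarrow> 'a ratfun) \<Rightarrow> bool" where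
  "tup_over L m \<psi> \<longleftrightarrow> (\<forall>j<m. rf_over L (\<psi> j))"

definition param_curve :: "nat \<Rightarrow> (nat \<Rightarrow> 'a::field ratfun) \<Rightarrow> (nat \<Rightarrow> 'a) set" where
  "param_curve m \<psi> = zar_closure m {tup_eval m \<psi> t | t. tup_defined m \<psi> t}"

text \<open>psi is proper (birational onto its image curve): it has a rational inverse
  A/B (A, B polynomials on F^m) defined on the curve, with (A/B) o psi = id.\<close>
definition proper_param :: "nat \<Rightarrow> (nat \<Rightarrow> 'a::field ratfun) \<Rightarrow> bool" where
  "proper_param m \<psi> \<longleftrightarrow> (\<exists>A\<in>poly_funs UNIV m. \<exists>B\<in>poly_funs UNIV m.
     finite {t. \<not> (tup_defined m \<psi> t \<and> B (tup_eval m \<psi> t) \<noteq> 0 \<and>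
                   A (tup_eval m \<psi> t) = t * B (tup_eval m \<psi> t))})"

text \<open>F_ij, D (coefficients in K, in n variables) satisfy
  psi_j(sum_i alpha^i t_i) = sum_i alpha^i F_ij / D  (stated as a polynomial identity).\<close>
definition hc_data :: "'a::field set \<Rightarrow> 'a \<Rightarrow> nat \<Rightarrow> nat \<Rightarrow> (nat \<Rightarrow> 'a ratfun)
    \<Rightarrow> (nat \<Rightarrow> nat \<Rightarrow> (nat \<Rightarrow> 'a) \<Rightarrow> 'a) \<Rightarrow> ((nat \<Rightarrow> 'a) \<Rightarrow> 'a) \<Rightarrow> bool" where
  "hc_data K \<alpha> n m \<psi> F D \<longleftrightarrow>
     D \<in> poly_funs K n \<and> (\<exists>x\<in>affine n. D x \<noteq> 0) \<and>
     (\<forall>i<n. \<forall>j<m. F i j \<in> poly_funs K n) \<and>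
     (\<forall>j<m. \<forall>x\<in>affine n.
        poly (fst (\<psi> j)) (\<Sum>i<n. \<alpha> ^ i * x i) * D x =
        poly (snd (\<psi> j)) (\<Sum>i<n. \<alpha> ^ i * x i) * (\<Sum>i<n. \<alpha> ^ i * F i j x))"

definition hc_Z :: "nat \<Rightarrow> nat \<Rightarrow> (nat \<Rightarrow> nat \<Rightarrow> (nat \<Rightarrow> 'a) \<Rightarrow> 'a) \<Rightarrow> ((nat \<Rightarrow> 'a) \<Rightarrow> 'a)
    \<Rightarrow> (nat \<Rightarrow> 'a::field) set" where
  "hc_Z n m F D = zar_closure n
     ({x \<in> affine n. \<forall>i\<in>{1..<n}. \<forall>j<m. F i j x = 0} - {x. D x = 0})"

definition is_hypercircle :: "nat \<Rightarrow> (nat \<Rightarrow> 'a::field) set \<Rightarrow> (nat \<Rightarrow> 'a) set \<Rightarrow> bool" where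
  "is_hypercircle n Z U \<longleftrightarrow> irred_component n Z U \<and> zar_dim_eq n U 1 \<and>
     (\<forall>V. irred_component n Z V \<and> zar_dim_eq n V 1 \<longrightarrow> V = U)"

definition standard_param :: "'a::field set \<Rightarrow> 'a \<Rightarrow> nat \<Rightarrow> (nat \<Rightarrow> 'a) set
    \<Rightarrow> (nat \<Rightarrow> 'a ratfun) \<Rightarrow> bool" where
  "standard_param K \<alpha> n U \<phi> \<longleftrightarrow> tup_over (adjoin K \<alpha>) n \<phi> \<and>
     U = param_curve n \<phi> \<and> proper_param n \<phi> \<and>
     (\<forall>t. tup_defined n \<phi> t \<longrightarrow> (\<Sum>i<n. \<alpha> ^ i * rf_eval (\<phi> i) t) = t)"

end

theory Submission
  imports Defs
begin


lemma aut_basic: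
  fixes \<tau> :: "'a::field \<Rightarrow> 'a"
  assumes aut: "is_K_automorphism K \<tau>" and sf: "is_subfield K"
  shows aut_add: "\<tau> (x + y) = \<tau> x + \<tau> y" and aut_mult: "\<tau> (x * y) = \<tau> x * \<tau> y"
    and aut_0: "\<tau> 0 = 0" and aut_1: "\<tau> 1 = 1" and aut_K: "c \<in> K \<Longrightarrow> \<tau> c = c"
    and aut_inj: "inj \<tau>" and aut_bij: "bij \<tau>"
proof -
  show "\<tau> (x + y) = \<tau> x + \<tau> y" "\<tau> (x * y) = \<tau> x * \<tau> y" using aut unfolding is_K_automorphism_def by auto
  show K: "c \<in> K \<Longrightarrow> \<tau> c = c" for c using aut unfolding is_K_automorphism_def by auto
  show "\<tau> 0 = 0" "\<tau> 1 = 1" using sf K unfolding is_subfield_def by auto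
  show "inj \<tau>" "bij \<tau>" using aut unfolding is_K_automorphism_def bij_def by auto
qed

lemma aut_more:
  fixes \<tau> :: "'a::field \<Rightarrow> 'a"
  assumes aut: "is_K_automorphism K \<tau>" and sf: "is_subfield K"
  shows aut_uminus: "\<tau> (- x) = - \<tau> x" and aut_diff: "\<tau> (x - y) = \<tau> x - \<tau> y"
    and aut_power: "\<tau> (x ^ k) = \<tau> x ^ k"
    and aut_eq0: "\<tau> x = 0 \<longleftrightarrow> x = 0"
    and aut_sum: "\<tau> (sum f A) = (\<Sum>a\<in>A. \<tau> (f a))"
    and aut_prod: "\<tau> (prod f A) = (\<Prod>a\<in>A. \<tau> (f a))"
    and aut_divide: "\<tau> (x / y) = \<tau> x / \<tau> y"
proof -
  note b = aut_basic[OF aut sf]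
  have um: "\<tau> (- z) = - \<tau> z" for z
  proof -
    have "\<tau> (- z) + \<tau> z = 0" using b(1)[of "-z" z, symmetric] b(3) by simp
    then show ?thesis by (simp add: eq_neg_iff_add_eq_0)
  qed
  show "\<tau> (- x) = - \<tau> x" by (rule um)
  show "\<tau> (x - y) = \<tau> x - \<tau> y" using b(1)[of x "-y"] um[of y] by simp
  show "\<tau> (x ^ k) = \<tau> x ^ k" by (induction k) (auto simp: b)
  show "\<tau> x = 0 \<longleftrightarrow> x = 0" using b(3) b(6) by (metis injD)
  show "\<tau> (sum f A) = (\<Sum>a\<in>A. \<tau> (f a))"
    by (induction A rule: infinite_finite_induct) (auto simp: b)
  show "\<tau> (prod f A) = (\<Prod>a\<in>A. \<tau> (f a))"
    by (induction A rule: infinite_finite_induct) (auto simp: b)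
  have inv: "\<tau> (inverse y) = inverse (\<tau> y)" for y
  proof (cases "y = 0")
    case True then show ?thesis by (simp add: b)
  next
    case False
    then have "\<tau> y * \<tau> (inverse y) = 1" using b(2)[of y "inverse y", symmetric] b(4) by simp
    then show ?thesis by (metis inverse_unique)
  qed
  show "\<tau> (x / y) = \<tau> x / \<tau> y" by (simp add: divide_inverse b(2) inv)
qed

lemma aut_inv:
  fixes \<tau> :: "'a::field \<Rightarrow> 'a"
  assumes aut: "is_K_automorphism K \<tau>" and sf: "is_subfield K"
  shows "is_K_automorphism K (inv \<tau>)"
proof -
  note b = aut_basic[OF aut sf]
  have bi: "bij (inv \<tau>)" using b(7) by (simp add: bij_imp_bij_inv)
  have tt: "\<tau> (inv \<tau> x) = x" for x using b(7) by (simp add: surj_f_inv_f bij_is_surj)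
  have it: "inv \<tau> (\<tau> x) = x" for x using b(6) by simp
  show ?thesis unfolding is_K_automorphism_def
  proof (intro conjI allI ballI bi)
    fix x y
    show "inv \<tau> (x + y) = inv \<tau> x + inv \<tau> y"
      by (metis b(1) it tt)
    show "inv \<tau> (x * y) = inv \<tau> x * inv \<tau> y"
      by (metis b(2) it tt)
  next
    fix c assume "c \<in> K" then show "inv \<tau> c = c" by (metis b(5) it)
  qed
qed

lemma aut_poly:
  fixes \<tau> :: "'a::field \<Rightarrow> 'a"
  assumes aut: "is_K_automorphism K \<tau>" and sf: "is_subfield K"
  shows "\<tau> (poly p z) = poly (map_poly \<tau> p) (\<tau> z)"
proof (induction p)
  case 0 then show ?case by (simp add: aut_basic[OF aut sf])
next
  case (pCons a p)
  have "map_poly \<tau> (pCons a p) = pCons (\<tau> a) (map_poly \<tau> p)"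
    by (simp add: map_poly_pCons aut_basic[OF aut sf])
  then show ?case using pCons by (simp add: aut_basic[OF aut sf])
qed

lemma aut_map_poly_0:
  fixes \<tau> :: "'a::field \<Rightarrow> 'a"
  assumes aut: "is_K_automorphism K \<tau>" and sf: "is_subfield K"
  shows "map_poly \<tau> p = 0 \<longleftrightarrow> p = 0"
  by (rule map_poly_eq_0_iff) (auto simp: aut_basic[OF aut sf] aut_more[OF aut sf])



lemma pf_mono: "f \<in> poly_funs S n \<Longrightarrow> S \<subseteq> T \<Longrightarrow> f \<in> poly_funs T n"
  by (induction rule: poly_funs.induct) (auto intro: poly_funs.intros)

lemma pf_K_aut:
  fixes \<tau> :: "'a::field \<Rightarrow> 'a"
  assumes aut: "is_K_automorphism K \<tau>" and sf: "is_subfield K"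
    and f: "f \<in> poly_funs K n"
  shows "\<tau> (f x) = f (\<tau> \<circ> x)"
  using f by (induction rule: poly_funs.induct) (auto simp: aut_basic[OF aut sf])

lemma pf_conj:
  fixes \<tau> :: "'a::field \<Rightarrow> 'a"
  assumes aut: "is_K_automorphism K \<tau>" and sf: "is_subfield K"
    and f: "f \<in> poly_funs UNIV n"
  shows "(\<lambda>x. \<tau> (f (inv \<tau> \<circ> x))) \<in> poly_funs UNIV n"
  using f
proof (induction rule: poly_funs.induct)
  case (pf_const c) then show ?case by (auto intro: poly_funs.intros)
next
  case (pf_var i)
  have "\<tau> (inv \<tau> z) = z" for z using aut_basic(7)[OF aut sf] by (simp add: surj_f_inv_f bij_is_surj)
  then show ?case using pf_var by (auto intro: poly_funs.intros)
next
  case (pf_add f g) then show ?case by (auto simp: aut_basic[OF aut sf] intro: poly_funs.intros)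
next
  case (pf_mult f g) then show ?case by (auto simp: aut_basic[OF aut sf] intro: poly_funs.intros)
qed

lemma pf_poly_comp:
  assumes f: "f \<in> poly_funs UNIV n"
  shows "(\<lambda>x. poly p (f x)) \<in> poly_funs UNIV n"
proof (induction p)
  case 0 then show ?case by (auto intro: poly_funs.intros)
next
  case (pCons a p)
  then show ?case using f by (auto intro!: poly_funs.intros)
qed

lemma pf_sum:
  assumes "\<And>i. i \<in> A \<Longrightarrow> f i \<in> poly_funs UNIV n"
  shows "(\<lambda>x. \<Sum>i\<in>A. f i x) \<in> poly_funs UNIV n"
  using assms
proof (induction A rule: infinite_finite_induct)
  case (infinite A) then show ?case by (auto intro: poly_funs.intros)
next
  case empty then show ?case by (auto intro: poly_funs.intros)
next
  case (insert a A)
  then show ?case by (auto intro!: poly_funs.intros)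
qed

lemma pf_diff:
  assumes "f \<in> poly_funs UNIV n" "g \<in> poly_funs UNIV n"
  shows "(\<lambda>x. f x - g x) \<in> poly_funs UNIV n"
proof -
  have c: "(\<lambda>x. - 1) \<in> poly_funs UNIV n" by (rule pf_const) simp
  have m: "(\<lambda>x. - 1 * g x) \<in> poly_funs UNIV n" by (rule pf_mult[OF c assms(2)])
  have "(\<lambda>x. f x + - 1 * g x) \<in> poly_funs UNIV n" by (rule pf_add[OF assms(1) m])
  then show ?thesis by simp
qed

lemma pf_lin:
  "(\<lambda>x. \<Sum>i<n. c ^ i * x i) \<in> poly_funs UNIV n"
  by (rule pf_sum) (auto intro!: poly_funs.intros)

section \<open>Homeomorphisms\<close>

definition zhomeo :: "nat \<Rightarrow> ((nat \<Rightarrow> 'a::field) \<Rightarrow> (nat \<Rightarrow> 'a)) \<Rightarrow> bool" where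
  "zhomeo n h \<longleftrightarrow> bij h \<and> (\<forall>A. zar_closed n (h ` A) \<longleftrightarrow> zar_closed n A)"

lemma zhomeo_inv:
  assumes "zhomeo n h" shows "zhomeo n (inv h)"
proof -
  have b: "bij h" using assms zhomeo_def by blast
  have "h ` (inv h ` A) = A" for A using b by (simp add: image_comp surj_f_inv_f bij_is_surj image_ident o_def)
  then show ?thesis using assms b unfolding zhomeo_def by (metis bij_imp_bij_inv)
qed

lemma zhomeo_ih: "zhomeo n h \<Longrightarrow> inv h ` (h ` A) = A"
  unfolding zhomeo_def by (simp add: image_comp bij_is_inj image_ident o_def)

lemma zhomeo_hi: "zhomeo n h \<Longrightarrow> h ` (inv h ` A) = A"
  unfolding zhomeo_def by (simp add: image_comp surj_f_inv_f bij_is_surj image_ident o_def)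

lemma zhomeo_closure_sub:
  assumes h: "zhomeo n h"
  shows "h ` zar_closure n A \<subseteq> zar_closure n (h ` A)"
proof
  fix z assume "z \<in> h ` zar_closure n A"
  then obtain y where y: "y \<in> zar_closure n A" "z = h y" by auto
  show "z \<in> zar_closure n (h ` A)"
    unfolding zar_closure_def
  proof (intro InterI, clarify)
    fix B assume B: "zar_closed n B" "h ` A \<subseteq> B"
    have "zar_closed n (inv h ` B)"
      using h zhomeo_inv[OF h] B(1) zhomeo_hi[OF h] unfolding zhomeo_def by metis
    moreover have "A \<subseteq> inv h ` B" using B(2) zhomeo_ih[OF h] by (metis image_mono)
    ultimately have "y \<in> inv h ` B" using y(1) unfolding zar_closure_def by blast
    then show "z \<in> B" using y(2) zhomeo_hi[OF h, of B] by (metis image_eqI)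
  qed
qed

lemma zhomeo_closure:
  assumes h: "zhomeo n h"
  shows "h ` zar_closure n A = zar_closure n (h ` A)"
proof
  show "h ` zar_closure n A \<subseteq> zar_closure n (h ` A)" by (rule zhomeo_closure_sub[OF h])
  have "inv h ` zar_closure n (h ` A) \<subseteq> zar_closure n (inv h ` h ` A)"
    by (rule zhomeo_closure_sub[OF zhomeo_inv[OF h]])
  then have "h ` inv h ` zar_closure n (h ` A) \<subseteq> h ` zar_closure n A"
    using zhomeo_ih[OF h] by (metis image_mono)
  then show "zar_closure n (h ` A) \<subseteq> h ` zar_closure n A" using zhomeo_hi[OF h] by metis
qed

lemma zhomeo_irred:
  assumes h: "zhomeo n h" and A: "zar_irreducible n A"
  shows "zar_irreducible n (h ` A)"
  unfolding zar_irreducible_def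
proof (intro conjI allI impI)
  show "h ` A \<noteq> {}" using A unfolding zar_irreducible_def by auto
  show "zar_closed n (h ` A)" using A h unfolding zar_irreducible_def zhomeo_def by auto
  fix B C assume B: "zar_closed n B" and C: "zar_closed n C" and sub: "h ` A \<subseteq> B \<union> C"
  have cB: "zar_closed n (inv h ` B)" using B zhomeo_hi[OF h] h unfolding zhomeo_def by metis
  have cC: "zar_closed n (inv h ` C)" using C zhomeo_hi[OF h] h unfolding zhomeo_def by metis
  have "inv h ` h ` A \<subseteq> inv h ` B \<union> inv h ` C" using sub by (metis image_Un image_mono)
  then have "A \<subseteq> inv h ` B \<union> inv h ` C" using zhomeo_ih[OF h] by simp
  then have "A \<subseteq> inv h ` B \<or> A \<subseteq> inv h ` C" using A cB cC unfolding zar_irreducible_def by blast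
  then show "h ` A \<subseteq> B \<or> h ` A \<subseteq> C" using zhomeo_hi[OF h] by (metis image_mono)
qed

lemma zhomeo_chain:
  assumes h: "zhomeo n h" and A: "has_irred_chain n A k"
  shows "has_irred_chain n (h ` A) k"
proof -
  obtain Zs where Z: "\<forall>i\<le>k. zar_irreducible n (Zs i) \<and> Zs i \<subseteq> A" "\<forall>i<k. Zs i \<subset> Zs (Suc i)"
    using A unfolding has_irred_chain_def by blast
  have inj: "inj h" using h unfolding zhomeo_def bij_def by auto
  show ?thesis unfolding has_irred_chain_def
    apply (rule exI[of _ "\<lambda>i. h ` Zs i"])
    using Z zhomeo_irred[OF h] inj by (auto simp: image_mono inj_image_subset_iff inj_image_eq_iff psubset_eq)
qed

lemma zhomeo_dim:
  assumes h: "zhomeo n h" and A: "zar_dim_eq n A d"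
  shows "zar_dim_eq n (h ` A) d"
proof -
  have "\<not> has_irred_chain n (h ` A) (Suc d)"
  proof
    assume "has_irred_chain n (h ` A) (Suc d)"
    then have "has_irred_chain n (inv h ` h ` A) (Suc d)" by (rule zhomeo_chain[OF zhomeo_inv[OF h]])
    then show False using A zhomeo_ih[OF h] unfolding zar_dim_eq_def by simp
  qed
  then show ?thesis using A zhomeo_chain[OF h] unfolding zar_dim_eq_def by blast
qed

lemma zhomeo_comp:
  assumes h: "zhomeo n h" and U: "irred_component n Z U"
  shows "irred_component n (h ` Z) (h ` U)"
  unfolding irred_component_def
proof (intro conjI allI impI)
  show "zar_irreducible n (h ` U)" using U zhomeo_irred[OF h] unfolding irred_component_def by blast
  show "h ` U \<subseteq> h ` Z" using U unfolding irred_component_def by blast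
  fix V assume V: "zar_irreducible n V" "h ` U \<subseteq> V" "V \<subseteq> h ` Z"
  have "zar_irreducible n (inv h ` V)" by (rule zhomeo_irred[OF zhomeo_inv[OF h] V(1)])
  moreover have "U \<subseteq> inv h ` V" using V(2) zhomeo_ih[OF h] by (metis image_mono)
  moreover have "inv h ` V \<subseteq> Z" using V(3) zhomeo_ih[OF h] by (metis image_mono)
  ultimately have "inv h ` V = U" using U unfolding irred_component_def by blast
  then show "V = h ` U" using zhomeo_hi[OF h] by metis
qed



lemma aut_tt:
  fixes \<tau> :: "'a::field \<Rightarrow> 'a"
  assumes aut: "is_K_automorphism K \<tau>" and sf: "is_subfield K"
  shows "\<tau> (inv \<tau> z) = z" "inv \<tau> (\<tau> z) = z"
  using aut_basic(6,7)[OF aut sf] by (auto simp: surj_f_inv_f bij_is_surj)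

lemma aut_closed:
  fixes \<tau> :: "'a::field \<Rightarrow> 'a"
  assumes aut: "is_K_automorphism K \<tau>" and sf: "is_subfield K"
    and A: "zar_closed n A"
  shows "zar_closed n ((\<circ>) \<tau> ` A)"
proof -
  obtain P where P: "P \<subseteq> poly_funs UNIV n" "A = zero_set n P"
    using A unfolding zar_closed_def defined_over_def by blast
  note tt = aut_tt[OF aut sf]
  note b = aut_basic[OF aut sf]
  have i0: "inv \<tau> 0 = 0" using tt b(3) by metis
  define P' where "P' = (\<lambda>f x. \<tau> (f (inv \<tau> \<circ> x))) ` P"
  have "P' \<subseteq> poly_funs UNIV n" using P(1) pf_conj[OF aut sf] unfolding P'_def by blast
  moreover have "(\<circ>) \<tau> ` A = zero_set n P'"
  proof
    show "(\<circ>) \<tau> ` A \<subseteq> zero_set n P'"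
    proof clarify
      fix x assume x: "x \<in> A"
      have "inv \<tau> \<circ> (\<tau> \<circ> x) = x" by (auto simp: tt)
      then show "\<tau> \<circ> x \<in> zero_set n P'" using x P(2) b(3)
        unfolding zero_set_def P'_def affine_def by auto
    qed
    show "zero_set n P' \<subseteq> (\<circ>) \<tau> ` A"
    proof
      fix y assume y: "y \<in> zero_set n P'"
      define x where "x = inv \<tau> \<circ> y"
      have "\<tau> \<circ> x = y" by (auto simp: x_def tt)
      moreover have "x \<in> A" using y i0 aut_more(4)[OF aut sf] unfolding P(2) zero_set_def P'_def affine_def x_def
        by auto
      ultimately show "y \<in> (\<circ>) \<tau> ` A" by blast
    qed
  qed
  ultimately show ?thesis unfolding zar_closed_def defined_over_def by blast
qed

lemma aut_zhomeo:
  fixes \<tau> :: "'a::field \<Rightarrow> 'a"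
  assumes aut: "is_K_automorphism K \<tau>" and sf: "is_subfield K"
  shows "zhomeo n ((\<circ>) \<tau>)"
proof -
  note tt = aut_tt[OF aut sf]
  have c1: "(\<circ>) (inv \<tau>) ` (\<circ>) \<tau> ` A = A" for A :: "(nat \<Rightarrow> 'a) set"
    by (auto simp: image_comp o_def tt)
  have "bij ((\<circ>) \<tau>)"
    by (rule o_bij[of "(\<circ>) (inv \<tau>)"]) (auto simp: tt o_def)
  moreover have "zar_closed n ((\<circ>) \<tau> ` A) \<longleftrightarrow> zar_closed n A" for A
    using aut_closed[OF aut sf, of n A] aut_closed[OF aut_inv[OF aut sf] sf, of n "(\<circ>) \<tau> ` A"] c1[of A]
    by auto
  ultimately show ?thesis unfolding zhomeo_def by blast
qed



lemma sum_collapse: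
  fixes c :: "'a::field"
  assumes "n \<ge> 1" "\<forall>i\<in>{1..<n}. g i = 0"
  shows "(\<Sum>i<n. c ^ i * g i) = g 0"
  using assms
proof (induction n)
  case 0 then show ?case by simp
next
  case (Suc n)
  show ?case
  proof (cases "n = 0")
    case True then show ?thesis by simp
  next
    case False
    then have "(\<Sum>i<n. c ^ i * g i) = g 0" using Suc by auto
    moreover have "g n = 0" using Suc.prems False by auto
    ultimately show ?thesis by simp
  qed
qed

lemma finite_undef:
  assumes "\<forall>i<n. snd (\<phi> i) \<noteq> (0::'a::field poly)"
  shows "finite {t. \<not> tup_defined n \<phi> t}"
proof -
  have "{t. \<not> tup_defined n \<phi> t} = (\<Union>i<n. {t. poly (snd (\<phi> i)) t = 0})"
    unfolding tup_defined_def rf_defined_def by auto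
  then show ?thesis using assms poly_roots_finite by auto
qed

lemma rat_const_finite:
  fixes \<phi> :: "nat \<Rightarrow> 'a::field ratfun" and w :: "nat \<Rightarrow> 'a"
  assumes q: "\<forall>i<n. snd (\<phi> i) \<noteq> 0"
    and inf: "infinite {t. tup_defined n \<phi> t \<and> (\<Sum>i<n. w i * rf_eval (\<phi> i) t) = c}"
  shows "\<forall>t. tup_defined n \<phi> t \<longrightarrow> (\<Sum>i<n. w i * rf_eval (\<phi> i) t) = c"
proof -
  define Qa where "Qa = (\<Prod>i<n. snd (\<phi> i))"
  define P where "P = (\<Sum>i<n. smult (w i) (fst (\<phi> i) * (\<Prod>k\<in>{..<n}-{i}. snd (\<phi> k))))"
  have key: "poly P t = (\<Sum>i<n. w i * rf_eval (\<phi> i) t) * poly Qa t" if d: "tup_defined n \<phi> t" for t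
  proof -
    have nz: "poly (snd (\<phi> i)) t \<noteq> 0" if "i < n" for i
      using d that unfolding tup_defined_def rf_defined_def by auto
    have "(\<Sum>i<n. w i * rf_eval (\<phi> i) t) * poly Qa t
        = (\<Sum>i<n. w i * rf_eval (\<phi> i) t * (\<Prod>k<n. poly (snd (\<phi> k)) t))"
      by (simp add: Qa_def poly_prod sum_distrib_right)
    also have "\<dots> = (\<Sum>i<n. w i * poly (fst (\<phi> i)) t * (\<Prod>k\<in>{..<n}-{i}. poly (snd (\<phi> k)) t))"
    proof (rule sum.cong[OF refl])
      fix i assume i: "i \<in> {..<n}"
      have "(\<Prod>k<n. poly (snd (\<phi> k)) t) = poly (snd (\<phi> i)) t * (\<Prod>k\<in>{..<n}-{i}. poly (snd (\<phi> k)) t)"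
        using i by (simp add: prod.remove)
      then show "w i * rf_eval (\<phi> i) t * (\<Prod>k<n. poly (snd (\<phi> k)) t) =
          w i * poly (fst (\<phi> i)) t * (\<Prod>k\<in>{..<n}-{i}. poly (snd (\<phi> k)) t)"
        using nz[of i] i by (simp add: rf_eval_def)
    qed
    also have "\<dots> = poly P t" by (simp add: P_def poly_sum poly_prod mult.assoc)
    finally show ?thesis by simp
  qed
  define R where "R = P - smult c Qa"
  have "{t. tup_defined n \<phi> t \<and> (\<Sum>i<n. w i * rf_eval (\<phi> i) t) = c} \<subseteq> {t. poly R t = 0}"
    using key by (auto simp: R_def)
  then have "infinite {t. poly R t = 0}" using inf finite_subset by blast
  then have R0: "R = 0" using poly_roots_finite by blast
  show ?thesis
  proof (intro allI impI)
    fix t assume d: "tup_defined n \<phi> t"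
    have "poly Qa t \<noteq> 0" using d unfolding Qa_def tup_defined_def rf_defined_def by (simp add: poly_prod)
    moreover have "poly P t = c * poly Qa t" using R0 unfolding R_def by (metis eq_iff_diff_eq_0 poly_smult)
    ultimately show "(\<Sum>i<n. w i * rf_eval (\<phi> i) t) = c" using key[OF d] by simp
  qed
qed



theorem theorem1:
  fixes K :: "'a::field_char_0 set" and \<alpha> :: 'a and n m :: nat
    and \<psi> \<phi> :: "nat \<Rightarrow> 'a ratfun"
    and F :: "nat \<Rightarrow> nat \<Rightarrow> (nat \<Rightarrow> 'a) \<Rightarrow> 'a" and D :: "(nat \<Rightarrow> 'a) \<Rightarrow> 'a"
    and U :: "(nat \<Rightarrow> 'a) set" and \<sigma> :: "'a \<Rightarrow> 'a"
  assumes "is_algebraic_closure_of K"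
    and "alg_degree K \<alpha> n"
    and "tup_over (adjoin K \<alpha>) m \<psi>"
    and "proper_param m \<psi>"
    and "defined_over K m (param_curve m \<psi>)"
    and "hc_data K \<alpha> n m \<psi> F D"
    and "is_hypercircle n (hc_Z n m F D) U"
    and "standard_param K \<alpha> n U \<phi>"
    and "is_K_automorphism K \<sigma>"
  shows "finite {t. \<not> (let u = (\<Sum>i<n. \<sigma> \<alpha> ^ i * rf_eval (\<phi> i) t) in
            tup_defined n \<phi> t \<and> tup_defined m \<psi> t \<and>
            tup_defined m (tup_conj \<sigma> \<psi>) u \<and>
            tup_eval m \<psi> t = tup_eval m (tup_conj \<sigma> \<psi>) u)}"
proof -
  note aut = assms(9)
  have sf: "is_subfield K" using assms(1) unfolding is_algebraic_closure_of_def by blast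
  note b = aut_basic[OF aut sf]
  note bm = aut_more[OF aut sf]
  note tt = aut_tt[OF aut sf]
  have n1: "n \<ge> 1"
  proof (rule ccontr)
    assume "\<not> n \<ge> 1"
    then have n0: "n = 0" by simp
    obtain p where p: "p \<noteq> 0" "poly p \<alpha> = 0" "degree p = n"
      using assms(2) unfolding alg_degree_def by blast
    then obtain c where "p = [:c:]" using n0 by (metis degree_eq_zeroE)
    then show False using p by simp
  qed
  have hcD: "D \<in> poly_funs K n" and hcF: "\<And>i j. i < n \<Longrightarrow> j < m \<Longrightarrow> F i j \<in> poly_funs K n"
    and hcI: "\<And>j x. j < m \<Longrightarrow> x \<in> affine n \<Longrightarrow>
        poly (fst (\<psi> j)) (\<Sum>i<n. \<alpha> ^ i * x i) * D x =
        poly (snd (\<psi> j)) (\<Sum>i<n. \<alpha> ^ i * x i) * (\<Sum>i<n. \<alpha> ^ i * F i j x)"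
    using assms(6) unfolding hc_data_def by auto
  define S where "S = {x \<in> affine n. \<forall>i\<in>{1..<n}. \<forall>j<m. F i j x = 0} - {x. D x = 0}"
  define Z where "Z = zar_closure n S"
  have Zdef: "hc_Z n m F D = Z" unfolding Z_def S_def hc_Z_def by simp
  have Ucomp: "irred_component n Z U" and Udim: "zar_dim_eq n U 1"
    and Uuniq: "\<And>V. irred_component n Z V \<Longrightarrow> zar_dim_eq n V 1 \<Longrightarrow> V = U"
    using assms(7) unfolding is_hypercircle_def Zdef by auto
  have UZ: "U \<subseteq> Z" using Ucomp unfolding irred_component_def by blast
  have phq: "\<forall>i<n. snd (\<phi> i) \<noteq> 0" and Uphi: "U = param_curve n \<phi>"
    and phsum: "\<And>t. tup_defined n \<phi> t \<Longrightarrow> (\<Sum>i<n. \<alpha> ^ i * rf_eval (\<phi> i) t) = t"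
    using assms(8) unfolding standard_param_def tup_over_def rf_over_def by auto
  have psq: "\<forall>j<m. snd (\<psi> j) \<noteq> 0" using assms(3) unfolding tup_over_def rf_over_def by auto

  have clos_sub: "zar_closure n A \<subseteq> B" if "zar_closed n B" "A \<subseteq> B" for A B
    using that unfolding zar_closure_def by blast
  have sub_clos: "A \<subseteq> zar_closure n A" for A unfolding zar_closure_def by blast

  have Sinv1: "\<tau> \<circ> x \<in> S" if t: "is_K_automorphism K \<tau>" and x: "x \<in> S" for \<tau> x
  proof -
    note bt = aut_basic[OF t sf]
    have "\<tau> \<circ> x \<in> affine n" using x bt(3) unfolding S_def affine_def by auto
    moreover have "F i j (\<tau> \<circ> x) = 0" if "i \<in> {1..<n}" "j < m" for i j
      using x that pf_K_aut[OF t sf hcF, of i j x] bt(3) unfolding S_def by auto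
    moreover have "D (\<tau> \<circ> x) \<noteq> 0"
      using x pf_K_aut[OF t sf hcD, of x] aut_more(4)[OF t sf] unfolding S_def by auto
    ultimately show ?thesis unfolding S_def by auto
  qed
  have Sinv: "(\<circ>) \<sigma> ` S = S"
  proof
    show "(\<circ>) \<sigma> ` S \<subseteq> S" using Sinv1[OF aut] by auto
    show "S \<subseteq> (\<circ>) \<sigma> ` S"
    proof
      fix x assume x: "x \<in> S"
      have "inv \<sigma> \<circ> x \<in> S" by (rule Sinv1[OF aut_inv[OF aut sf] x])
      moreover have "x = \<sigma> \<circ> (inv \<sigma> \<circ> x)" by (auto simp: tt)
      ultimately show "x \<in> (\<circ>) \<sigma> ` S" by blast
    qed
  qed
  have hom: "zhomeo n ((\<circ>) \<sigma>)" by (rule aut_zhomeo[OF aut sf])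
  have Zinv: "(\<circ>) \<sigma> ` Z = Z" unfolding Z_def using zhomeo_closure[OF hom] Sinv by simp
  have Uinv: "(\<circ>) \<sigma> ` U = U"
  proof -
    have "irred_component n Z ((\<circ>) \<sigma> ` U)" using zhomeo_comp[OF hom Ucomp] Zinv by simp
    then show ?thesis by (rule Uuniq) (rule zhomeo_dim[OF hom Udim])
  qed

  define a where "a = (\<lambda>x::nat \<Rightarrow> 'a. \<Sum>i<n. \<alpha> ^ i * x i)"
  define bb where "bb = (\<lambda>x::nat \<Rightarrow> 'a. \<Sum>i<n. \<sigma> \<alpha> ^ i * x i)"
  define yt where "yt = tup_eval n \<phi>"
  have yt_aff: "yt t \<in> affine n" for t unfolding yt_def tup_eval_def affine_def by auto
  have yt_U: "yt t \<in> U" if "tup_defined n \<phi> t" for t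
  proof -
    have "yt t \<in> {tup_eval n \<phi> t |t. tup_defined n \<phi> t}" using that unfolding yt_def by blast
    then have "yt t \<in> zar_closure n {tup_eval n \<phi> t |t. tup_defined n \<phi> t}" using sub_clos by (rule subsetD[rotated])
    then show ?thesis unfolding Uphi param_curve_def .
  qed
  have a_yt: "a (yt t) = t" if "tup_defined n \<phi> t" for t
    using phsum[OF that] unfolding a_def yt_def tup_eval_def by simp
  have bb_yt: "bb (yt t) = (\<Sum>i<n. \<sigma> \<alpha> ^ i * rf_eval (\<phi> i) t)" for t
    unfolding bb_def yt_def tup_eval_def by simp
  have sig_a: "\<sigma> (a y) = bb (\<sigma> \<circ> y)" for y
    unfolding a_def bb_def by (simp add: bm(5) b(2) bm(3))

  define G where "G = (\<lambda>j x. poly (fst (\<psi> j)) (a x) * poly (map_poly \<sigma> (snd (\<psi> j))) (bb x)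
       - poly (map_poly \<sigma> (fst (\<psi> j))) (bb x) * poly (snd (\<psi> j)) (a x))"
  have Gpf: "G j \<in> poly_funs UNIV n" for j
  proof -
    have a1: "a \<in> poly_funs UNIV n" unfolding a_def by (rule pf_lin)
    have b1: "bb \<in> poly_funs UNIV n" unfolding bb_def by (rule pf_lin)
    show ?thesis unfolding G_def
      by (intro pf_diff pf_mult pf_poly_comp a1 b1)
  qed
  have GS: "G j x = 0" if j: "j < m" and x: "x \<in> S" for j x
  proof -
    have xa: "x \<in> affine n" and Fz: "\<forall>i\<in>{1..<n}. F i j x = 0" and Dx: "D x \<noteq> 0"
      using x j unfolding S_def by auto
    define x' where "x' = inv \<sigma> \<circ> x"
    have i0: "inv \<sigma> 0 = 0" using tt(2)[of 0] b(3) by simp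
    have xa': "x' \<in> affine n" using xa i0 unfolding x'_def affine_def by simp
    have E1: "poly (fst (\<psi> j)) (a x) * D x = poly (snd (\<psi> j)) (a x) * F 0 j x"
      using hcI[OF j xa] sum_collapse[OF n1, of "\<lambda>i. F i j x" \<alpha>] Fz unfolding a_def by simp
    have sx: "\<sigma> \<circ> x' = x" by (auto simp: x'_def tt)
    have id': "poly (fst (\<psi> j)) (a x') * D x' = poly (snd (\<psi> j)) (a x') * (\<Sum>i<n. \<alpha> ^ i * F i j x')"
      using hcI[OF j xa'] unfolding a_def by simp
    have sa: "\<sigma> (a x') = bb x" using sig_a[of x'] sx by simp
    have sD: "\<sigma> (D x') = D x" using pf_K_aut[OF aut sf hcD, of x'] sx by simp
    have sP: "\<sigma> (poly p (a x')) = poly (map_poly \<sigma> p) (bb x)" for p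
      using aut_poly[OF aut sf, of p "a x'"] sa by simp
    have sF: "\<sigma> (\<Sum>i<n. \<alpha> ^ i * F i j x') = (\<Sum>i<n. \<sigma> \<alpha> ^ i * F i j x)"
    proof -
      have "\<sigma> (\<Sum>i<n. \<alpha> ^ i * F i j x') = (\<Sum>i<n. \<sigma> (\<alpha> ^ i * F i j x'))" by (rule bm(5))
      also have "\<dots> = (\<Sum>i<n. \<sigma> \<alpha> ^ i * F i j x)"
      proof (rule sum.cong[OF refl])
        fix i assume "i \<in> {..<n}"
        then have "\<sigma> (F i j x') = F i j x" using pf_K_aut[OF aut sf hcF[of i j], of x'] sx j by simp
        then show "\<sigma> (\<alpha> ^ i * F i j x') = \<sigma> \<alpha> ^ i * F i j x" by (simp only: b(2) bm(3))
      qed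
      finally show ?thesis .
    qed
    have "\<sigma> (poly (fst (\<psi> j)) (a x') * D x') = \<sigma> (poly (snd (\<psi> j)) (a x') * (\<Sum>i<n. \<alpha> ^ i * F i j x'))"
      using id' by simp
    then have "poly (map_poly \<sigma> (fst (\<psi> j))) (bb x) * D x =
               poly (map_poly \<sigma> (snd (\<psi> j))) (bb x) * (\<Sum>i<n. \<sigma> \<alpha> ^ i * F i j x)"
      by (simp only: b(2) sP sD sF)
    then have E2: "poly (map_poly \<sigma> (fst (\<psi> j))) (bb x) * D x = poly (map_poly \<sigma> (snd (\<psi> j))) (bb x) * F 0 j x"
      using sum_collapse[OF n1, of "\<lambda>i. F i j x" "\<sigma> \<alpha>"] Fz by simp
    define Na where "Na = poly (fst (\<psi> j)) (a x)"
    define Qa where "Qa = poly (snd (\<psi> j)) (a x)"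
    define Ns where "Ns = poly (map_poly \<sigma> (fst (\<psi> j))) (bb x)"
    define Qs where "Qs = poly (map_poly \<sigma> (snd (\<psi> j))) (bb x)"
    have e1: "Na * D x = Qa * F 0 j x" using E1 unfolding Na_def Qa_def .
    have e2: "Ns * D x = Qs * F 0 j x" using E2 unfolding Ns_def Qs_def .
    have "(Na * Qs) * D x = (Na * D x) * Qs" by (simp only: ac_simps)
    also have "\<dots> = (Qa * F 0 j x) * Qs" by (simp only: e1)
    also have "\<dots> = (Qs * F 0 j x) * Qa" by (simp only: ac_simps)
    also have "\<dots> = (Ns * D x) * Qa" by (simp only: e2)
    also have "\<dots> = (Ns * Qa) * D x" by (simp only: ac_simps)
    finally have "(Na * Qs) * D x = (Ns * Qa) * D x" .
    then have "(poly (fst (\<psi> j)) (a x) * poly (map_poly \<sigma> (snd (\<psi> j))) (bb x)) * D x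
        = (poly (map_poly \<sigma> (fst (\<psi> j))) (bb x) * poly (snd (\<psi> j)) (a x)) * D x"
      unfolding Na_def Qa_def Ns_def Qs_def .
    then show ?thesis using Dx unfolding G_def by simp
  qed
  have GU: "G j y = 0" if j: "j < m" and y: "y \<in> U" for j y
  proof -
    have cl: "zar_closed n (zero_set n (G ` {..<m}))"
      unfolding zar_closed_def defined_over_def using Gpf by blast
    have "S \<subseteq> zero_set n (G ` {..<m})" using GS unfolding zero_set_def S_def by auto
    then have "Z \<subseteq> zero_set n (G ` {..<m})" using clos_sub cl unfolding Z_def by blast
    then show ?thesis using y j UZ unfolding zero_set_def by auto
  qed

  have finc: "finite {t. tup_defined n \<phi> t \<and> bb (yt t) = c}" for c
  proof (rule ccontr)
    assume inf: "infinite {t. tup_defined n \<phi> t \<and> bb (yt t) = c}"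
    have all: "\<forall>t. tup_defined n \<phi> t \<longrightarrow> (\<Sum>i<n. \<sigma> \<alpha> ^ i * rf_eval (\<phi> i) t) = c"
      by (rule rat_const_finite[OF phq]) (use inf bb_yt in simp)
    have cl: "zar_closed n (zero_set n {\<lambda>x. bb x - c})"
      unfolding zar_closed_def defined_over_def
      using pf_diff[OF pf_lin[of "\<sigma> \<alpha>" n] pf_const[of c UNIV n]] unfolding bb_def by auto
    have "{tup_eval n \<phi> t |t. tup_defined n \<phi> t} \<subseteq> zero_set n {\<lambda>x. bb x - c}"
      using all yt_aff bb_yt unfolding zero_set_def yt_def by auto
    then have UW: "U \<subseteq> zero_set n {\<lambda>x. bb x - c}"
      using clos_sub cl unfolding Uphi param_curve_def by blast
    have "\<sigma> t = c" if d: "tup_defined n \<phi> t" for t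
    proof -
      have "\<sigma> \<circ> yt t \<in> U" using yt_U[OF d] Uinv by blast
      then have "bb (\<sigma> \<circ> yt t) = c" using UW unfolding zero_set_def by auto
      then show ?thesis using sig_a[of "yt t"] a_yt[OF d] by simp
    qed
    then have sc: "\<And>t. tup_defined n \<phi> t \<Longrightarrow> \<sigma> t = c" by blast
    have "{t. tup_defined n \<phi> t \<and> bb (yt t) = c} \<subseteq> {inv \<sigma> c}"
    proof
      fix t assume "t \<in> {t. tup_defined n \<phi> t \<and> bb (yt t) = c}"
      then have "\<sigma> t = c" using sc by blast
      then have "t = inv \<sigma> c" using tt(2)[of t] by simp
      then show "t \<in> {inv \<sigma> c}" by simp
    qed
    then show False using inf finite_subset by blast
  qed

  define BB where "BB = (\<Union>j<m. \<Union>r\<in>{r. poly (map_poly \<sigma> (snd (\<psi> j))) r = 0}. {t. tup_defined n \<phi> t \<and> bb (yt t) = r})"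
  define Bad where "Bad = {t. \<not> tup_defined n \<phi> t} \<union> {t. \<not> tup_defined m \<psi> t} \<union> BB"
  have "finite Bad"
  proof -
    have fr: "finite {r. poly (map_poly \<sigma> (snd (\<psi> j))) r = 0}" if "j < m" for j
    proof (rule poly_roots_finite)
      show "map_poly \<sigma> (snd (\<psi> j)) \<noteq> 0"
        using psq that aut_map_poly_0[OF aut sf, of "snd (\<psi> j)"] by blast
    qed
    have "finite BB" unfolding BB_def
    proof (rule finite_UN_I[OF finite_lessThan])
      fix j assume "j \<in> {..<m}"
      then have "j < m" by simp
      show "finite (\<Union>r\<in>{r. poly (map_poly \<sigma> (snd (\<psi> j))) r = 0}. {t. tup_defined n \<phi> t \<and> bb (yt t) = r})"
        by (rule finite_UN_I[OF fr[OF \<open>j < m\<close>]]) (rule finc)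
    qed
    then show ?thesis unfolding Bad_def using finite_undef[OF phq] finite_undef[OF psq]
      by (intro finite_UnI)
  qed
  moreover have "{t. \<not> (let u = (\<Sum>i<n. \<sigma> \<alpha> ^ i * rf_eval (\<phi> i) t) in
            tup_defined n \<phi> t \<and> tup_defined m \<psi> t \<and>
            tup_defined m (tup_conj \<sigma> \<psi>) u \<and>
            tup_eval m \<psi> t = tup_eval m (tup_conj \<sigma> \<psi>) u)} \<subseteq> Bad"
  proof (rule subsetI, rule ccontr)
    fix t assume tbad: "t \<in> {t. \<not> (let u = (\<Sum>i<n. \<sigma> \<alpha> ^ i * rf_eval (\<phi> i) t) in
            tup_defined n \<phi> t \<and> tup_defined m \<psi> t \<and>
            tup_defined m (tup_conj \<sigma> \<psi>) u \<and>
            tup_eval m \<psi> t = tup_eval m (tup_conj \<sigma> \<psi>) u)}" and nb: "t \<notin> Bad"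
    define u where "u = bb (yt t)"
    have ueq: "(\<Sum>i<n. \<sigma> \<alpha> ^ i * rf_eval (\<phi> i) t) = u" unfolding u_def bb_yt ..
    have tb: "\<not> (tup_defined n \<phi> t \<and> tup_defined m \<psi> t \<and>
            tup_defined m (tup_conj \<sigma> \<psi>) u \<and>
            tup_eval m \<psi> t = tup_eval m (tup_conj \<sigma> \<psi>) u)"
      using tbad unfolding mem_Collect_eq Let_def ueq .
    have dphi: "tup_defined n \<phi> t" using nb unfolding Bad_def by blast
    have dpsi: "tup_defined m \<psi> t" using nb unfolding Bad_def by blast
    have qs: "poly (map_poly \<sigma> (snd (\<psi> j))) u \<noteq> 0" if j: "j < m" for j
    proof
      assume "poly (map_poly \<sigma> (snd (\<psi> j))) u = 0"
      then have "t \<in> BB" unfolding BB_def using j dphi u_def by blast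
      then show False using nb unfolding Bad_def by blast
    qed
    have d3: "tup_defined m (tup_conj \<sigma> \<psi>) u"
      using qs unfolding tup_defined_def rf_defined_def tup_conj_def rf_conj_def by simp
    have eq: "tup_eval m \<psi> t = tup_eval m (tup_conj \<sigma> \<psi>) u"
    proof
      fix j show "tup_eval m \<psi> t j = tup_eval m (tup_conj \<sigma> \<psi>) u j"
      proof (cases "j < m")
        case False then show ?thesis unfolding tup_eval_def by simp
      next
        case True
        have "G j (yt t) = 0" by (rule GU[OF True yt_U[OF dphi]])
        then have cross: "poly (fst (\<psi> j)) t * poly (map_poly \<sigma> (snd (\<psi> j))) u
             = poly (map_poly \<sigma> (fst (\<psi> j))) u * poly (snd (\<psi> j)) t"
          unfolding G_def u_def a_yt[OF dphi] by simp
        have q1: "poly (snd (\<psi> j)) t \<noteq> 0" using dpsi True unfolding tup_defined_def rf_defined_def by blast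
        have "poly (fst (\<psi> j)) t / poly (snd (\<psi> j)) t =
              poly (map_poly \<sigma> (fst (\<psi> j))) u / poly (map_poly \<sigma> (snd (\<psi> j))) u"
          using cross by (subst frac_eq_eq[OF q1 qs[OF True]])
        then show ?thesis using True
          unfolding tup_eval_def tup_conj_def rf_conj_def rf_eval_def by simp
      qed
    qed
    show False using tb dphi dpsi d3 eq by blast
  qed
  ultimately show ?thesis by (rule finite_subset[rotated])
qed


end
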